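(* Let $a \ge 2$ be even and $b \ge 2$ be an integer such that $a \equiv 2 \pmod 4$ or $b$ is even. Then $R_\mathrm{cyc}(M_a^\mathrm{nest}, S_b) \ge a + b - 2$, where $S_b$ is any star graph of order $b$.
   Context: All graphs are finite, simple and undirected, and a graph of order $n$ has vertex set $\{0,1,\ldots,n-1\}$; $K_n$ is the complete graph on $\{0,\ldots,n-1\}$. A $2$-edge-coloring of $K_n$ assigns each edge a color in $\{1,2\}$. For a graph $H$ and such a coloring, an embedding of $H$ in color $j$ is an injective map $\varphi\colon V(H)\to V(K_n)$ such that for every edge $uv$ of $H$ the edge $\{\varphi(u),\varphi(v)\}$ has color $j$; it is increasing up to a cyclic permutation if there exists $t\in V(H)$ such that $(\varphi(t),\ldots,\varphi(|H|-1),\varphi(0),\ldots,\varphi(t-1))$ is increasing. The cyclic Ramsey number $R_\mathrm{cyc}(H_1,H_2)$ is the smallest $n$ such that every $2$-edge-coloring of $K_n$ admits an embedding of $H_1$ in color $1$ or of $H_2$ in color $2$ that is increasing up to a cyclic permutation. For even $n\ge2$, the nested matching $M_n^\mathrm{nest}$ is the graph of order $n$ whose edges are $\{v,n-1-v\}$ for $0\le v\le n/2-1$. A star graph of order $n$ is a graph on $\{0,\ldots,n-1\}$ in which one vertex (the center, arbitrary) is adjacent to all others and there are no other edges. *)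

theory Defs
  imports Main
begin

text \<open>A graph of order h is represented by h together with its edge set E, a set of
  2-element subsets of {0..<h}.\<close>

definition two_coloring :: "nat \<Rightarrow> (nat set \<Rightarrow> nat) \<Rightarrow> bool" where
  "two_coloring n c \<longleftrightarrow> (\<forall>u v. u < n \<longrightarrow> v < n \<longrightarrow> u \<noteq> v \<longrightarrow> c {u, v} \<in> {1, 2})"

definition cyc_increasing :: "nat \<Rightarrow> (nat \<Rightarrow> nat) \<Rightarrow> bool" where
  "cyc_increasing h \<phi> \<longleftrightarrow>
     (\<exists>t < h. \<forall>i j. i < j \<longrightarrow> j < h \<longrightarrow> \<phi> ((t + i) mod h) < \<phi> ((t + j) mod h))"

definition embedding :: "nat \<Rightarrow> (nat set \<Rightarrow> nat) \<Rightarrow> nat \<Rightarrow> nat set set \<Rightarrow> nat \<Rightarrow> (nat \<Rightarrow> nat) \<Rightarrow> bool" where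
  "embedding n c h E j \<phi> \<longleftrightarrow>
     inj_on \<phi> {0..<h} \<and> \<phi> ` {0..<h} \<subseteq> {0..<n} \<and> (\<forall>e \<in> E. c (\<phi> ` e) = j)"

definition Rcyc :: "nat \<Rightarrow> nat set set \<Rightarrow> nat \<Rightarrow> nat set set \<Rightarrow> nat" where
  "Rcyc h1 E1 h2 E2 = (LEAST n. \<forall>c. two_coloring n c \<longrightarrow>
      (\<exists>\<phi>. embedding n c h1 E1 1 \<phi> \<and> cyc_increasing h1 \<phi>) \<or>
      (\<exists>\<phi>. embedding n c h2 E2 2 \<phi> \<and> cyc_increasing h2 \<phi>))"

definition nested_matching :: "nat \<Rightarrow> nat set set" where
  "nested_matching n = {{v, n - 1 - v} | v. v < n div 2}"

definition is_star :: "nat \<Rightarrow> nat set set \<Rightarrow> bool" where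
  "is_star b E \<longleftrightarrow> (\<exists>z < b. E = {{z, v} | v. v < b \<and> v \<noteq> z})"

end

theory Submission
  imports Defs "HOL-Library.Ramsey"
begin

lemma emb_from_set:
  assumes "finite R" "R \<subseteq> {0..<n}" "card R = h" "h > 0"
    "\<forall>x\<in>R. \<forall>y\<in>R. x \<noteq> y \<longrightarrow> c {x,y} = j"
    "\<forall>e\<in>E. \<exists>x y. e = {x,y} \<and> x \<noteq> y \<and> x < h \<and> y < h"
  shows "\<exists>\<phi>. embedding n c h E j \<phi> \<and> cyc_increasing h \<phi>"
proof -
  define xs where "xs = sorted_list_of_set R"
  have len: "length xs = h" using assms xs_def by simp
  have st: "sorted_wrt (<) xs" unfolding xs_def by simp
  have setx: "set xs = R" using assms xs_def by simp
  have lt: "\<And>i j. i < j \<Longrightarrow> j < h \<Longrightarrow> xs ! i < xs ! j"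
    using st len by (simp add: sorted_wrt_nth_less)
  have mem: "\<And>i. i < h \<Longrightarrow> xs ! i \<in> R" using len setx nth_mem by blast
  have inj: "inj_on ((!) xs) {0..<h}"
    by (rule inj_onI) (metis atLeastLessThan_iff lt nat_neq_iff)
  have img: "(!) xs ` {0..<h} \<subseteq> {0..<n}" using mem assms(2) by auto
  have ed: "\<forall>e\<in>E. c ((!) xs ` e) = j"
  proof
    fix e assume "e \<in> E"
    then obtain x y where e: "e = {x,y}" "x \<noteq> y" "x < h" "y < h" using assms(6) by blast
    have "xs ! x \<noteq> xs ! y" using inj e by (simp add: inj_on_eq_iff)
    then show "c ((!) xs ` e) = j" using e mem assms(5) by simp
  qed
  have cyc: "cyc_increasing h ((!) xs)"
    unfolding cyc_increasing_def using assms(4) lt by (intro exI[of _ 0]) auto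
  show ?thesis using inj img ed cyc unfolding embedding_def by blast
qed

lemma rcyc_exists:
  assumes "a \<ge> 2" "b \<ge> 2" "is_star b S"
  shows "\<exists>N. \<forall>c. two_coloring N c \<longrightarrow>
      (\<exists>\<phi>. embedding N c a (nested_matching a) 1 \<phi> \<and> cyc_increasing a \<phi>) \<or>
      (\<exists>\<phi>. embedding N c b S 2 \<phi> \<and> cyc_increasing b \<phi>)"
proof -
  obtain r where r: "\<forall>(V::nat set) (E::nat set set). finite V \<and> card V \<ge> r \<longrightarrow>
    (\<exists>R \<subseteq> V. card R = a \<and> clique R E \<or> card R = b \<and> indep R E)"
    using ramsey2 by blast
  show ?thesis
  proof (intro exI allI impI)
    fix c assume tc: "two_coloring r c"
    obtain R where R: "R \<subseteq> {0..<r}" "card R = a \<and> clique R {e. c e = 1} \<or> card R = b \<and> indep R {e. c e = 1}"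
      using r[rule_format, of "{0..<r}" "{e. c e = 1}"] by auto
    have fR: "finite R" using R(1) finite_subset by blast
    have EM: "\<forall>e\<in>nested_matching a. \<exists>x y. e = {x,y} \<and> x \<noteq> y \<and> x < a \<and> y < a"
      unfolding nested_matching_def
    proof
      fix e assume "e \<in> {{v, a - 1 - v} |v. v < a div 2}"
      then obtain v where "e = {v, a - 1 - v}" "v < a div 2" by blast
      moreover have "v \<noteq> a - 1 - v" "v < a" "a - 1 - v < a" using \<open>v < a div 2\<close> assms(1) by auto
      ultimately show "\<exists>x y. e = {x,y} \<and> x \<noteq> y \<and> x < a \<and> y < a" by blast
    qed
    have ES: "\<forall>e\<in>S. \<exists>x y. e = {x,y} \<and> x \<noteq> y \<and> x < b \<and> y < b"
      proof
      fix e assume "e \<in> S"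
      obtain z where z: "z < b" "S = {{z, v} | v. v < b \<and> v \<noteq> z}" using assms(3) unfolding is_star_def by blast
      then obtain v where "e = {z, v}" "v < b" "v \<noteq> z" using \<open>e \<in> S\<close> by blast
      then show "\<exists>x y. e = {x,y} \<and> x \<noteq> y \<and> x < b \<and> y < b" using z by blast
    qed
    from R(2) show "(\<exists>\<phi>. embedding r c a (nested_matching a) 1 \<phi> \<and> cyc_increasing a \<phi>) \<or>
      (\<exists>\<phi>. embedding r c b S 2 \<phi> \<and> cyc_increasing b \<phi>)"
    proof
      assume "card R = a \<and> clique R {e. c e = 1}"
      then have "\<exists>\<phi>. embedding r c a (nested_matching a) 1 \<phi> \<and> cyc_increasing a \<phi>"
        apply (intro emb_from_set[OF fR R(1), of a, OF _ _ _ EM])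
        using assms(1) unfolding clique_def by auto
      then show ?thesis by blast
    next
      assume H: "card R = b \<and> indep R {e. c e = 1}"
      have "\<forall>x\<in>R. \<forall>y\<in>R. x \<noteq> y \<longrightarrow> c {x,y} = 2"
      proof (intro ballI impI)
        fix x y assume "x \<in> R" "y \<in> R" "x \<noteq> y"
        have "c {x,y} \<noteq> 1" using H \<open>x \<in> R\<close> \<open>y \<in> R\<close> \<open>x \<noteq> y\<close> unfolding indep_def by blast
        moreover have "x < r" "y < r" using R(1) \<open>x \<in> R\<close> \<open>y \<in> R\<close> by auto
        ultimately show "c {x,y} = 2" using tc \<open>x \<noteq> y\<close> unfolding two_coloring_def by blast
      qed
      then have "\<exists>\<phi>. embedding r c b S 2 \<phi> \<and> cyc_increasing b \<phi>"
        apply (intro emb_from_set[OF fR R(1), of b, OF _ _ _ ES])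
        using assms(2) H by auto
      then show ?thesis by blast
    qed
  qed
qed

definition ld :: "nat \<Rightarrow> nat \<Rightarrow> nat" where "ld x y = (if x \<le> y then y - x else x - y)"
definition cdist :: "nat \<Rightarrow> nat \<Rightarrow> nat \<Rightarrow> nat" where "cdist n x y = min (ld x y) (n - ld x y)"
definition col :: "(nat \<Rightarrow> nat \<Rightarrow> bool) \<Rightarrow> nat set \<Rightarrow> nat" where
  "col P e = (if \<exists>x\<in>e. \<exists>y\<in>e. x \<noteq> y \<and> P x y then 1 else 2)"

lemma cdist_sym: "cdist n x y = cdist n y x" unfolding cdist_def ld_def by auto

lemma col_pair: assumes "\<And>x y. P x y \<Longrightarrow> P y x" "x \<noteq> y"
  shows "col P {x,y} = (if P x y then 1 else 2)"
  using assms unfolding col_def by auto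

lemma col_two: "two_coloring n (col P)" unfolding two_coloring_def col_def by auto

lemma inc_gap:
  assumes "\<forall>i j. i < j \<longrightarrow> j < a \<longrightarrow> (q::nat\<Rightarrow>nat) i < q j"
  shows "i \<le> j \<Longrightarrow> j < a \<Longrightarrow> q i + (j - i) \<le> q j"
proof (induction j)
  case 0 then show ?case by simp
next
  case (Suc j)
  show ?case
  proof (cases "i = Suc j")
    case True then show ?thesis by simp
  next
    case False
    then have "i \<le> j" using Suc by simp
    then have "q i + (j - i) \<le> q j" using Suc by simp
    moreover have "q j < q (Suc j)" using assms Suc by simp
    ultimately show ?thesis using \<open>i \<le> j\<close> by simp
  qed
qed

lemma edge_P:
  assumes "embedding n (col P) a (nested_matching a) 1 \<phi>" "\<And>x y. P x y \<Longrightarrow> P y x" "v < a div 2"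
  shows "P (\<phi> v) (\<phi> (a - 1 - v))"
proof -
  have e: "{v, a - 1 - v} \<in> nested_matching a" unfolding nested_matching_def using assms(3) by blast
  have ne: "v \<noteq> a - 1 - v" "v < a" "a - 1 - v < a" using assms(3) by auto
  have "inj_on \<phi> {0..<a}" using assms(1) unfolding embedding_def by blast
  then have nn: "\<phi> v \<noteq> \<phi> (a - 1 - v)" using ne by (simp add: inj_on_eq_iff)
  have "col P (\<phi> ` {v, a - 1 - v}) = 1" using assms(1) e unfolding embedding_def by blast
  then have "col P {\<phi> v, \<phi> (a - 1 - v)} = 1" by simp
  then have "(if P (\<phi> v) (\<phi> (a - 1 - v)) then 1 else 2) = (1::nat)" using col_pair[OF assms(2) nn] by simp
  then show ?thesis by (cases "P (\<phi> v) (\<phi> (a - 1 - v))") auto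
qed

lemma star_none:
  assumes "is_star b S" "b \<ge> 2"
    "\<And>x. x < n \<Longrightarrow> card {y. y < n \<and> y \<noteq> x \<and> c {x,y} = 2} \<le> b - 2"
  shows "\<not> embedding n c b S 2 \<phi>"
proof
  assume em: "embedding n c b S 2 \<phi>"
  obtain z where z: "z < b" "S = {{z, v} | v. v < b \<and> v \<noteq> z}" using assms(1) unfolding is_star_def by blast
  have inj: "inj_on \<phi> {0..<b}" and im: "\<phi> ` {0..<b} \<subseteq> {0..<n}" using em unfolding embedding_def by auto
  have xn: "\<phi> z < n" using im z by (meson atLeastLessThan_iff image_subset_iff zero_le)
  have sub: "\<phi> ` ({0..<b} - {z}) \<subseteq> {y. y < n \<and> y \<noteq> \<phi> z \<and> c {\<phi> z, y} = 2}"
  proof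
    fix y assume "y \<in> \<phi> ` ({0..<b} - {z})"
    then obtain v where v: "v \<in> {0..<b} - {z}" "y = \<phi> v" by blast
    then have v: "v < b" "v \<noteq> z" "y = \<phi> v" by auto
    have "{z, v} \<in> S" unfolding z(2) using v(1,2) by blast
    then have "c (\<phi> ` {z, v}) = 2" using em unfolding embedding_def by blast
    moreover have "\<phi> v \<noteq> \<phi> z" using inj v(1,2) z(1) by (simp add: inj_on_eq_iff)
    moreover have "\<phi> v < n" using im v by (meson atLeastLessThan_iff image_subset_iff zero_le)
    ultimately show "y \<in> {y. y < n \<and> y \<noteq> \<phi> z \<and> c {\<phi> z, y} = 2}" using v(3) by simp
  qed
  have "card (\<phi> ` ({0..<b} - {z})) = b - 1"
    using inj z by (simp add: card_image inj_on_diff)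
  moreover have "card (\<phi> ` ({0..<b} - {z})) \<le> card {y. y < n \<and> y \<noteq> \<phi> z \<and> c {\<phi> z, y} = 2}"
    by (rule card_mono[OF _ sub]) auto
  ultimately show False using assms(3)[OF xn] assms(2) by linarith
qed

lemma circ_count:
  assumes "x < n" "\<And>y. y < n \<Longrightarrow> y \<noteq> x \<Longrightarrow> Q y \<Longrightarrow> \<exists>k\<in>K. (if x + k < n then x + k else x + k - n) = y"
    "finite K"
  shows "card {y. y < n \<and> y \<noteq> x \<and> Q y} \<le> card K"
proof -
  have "{y. y < n \<and> y \<noteq> x \<and> Q y} \<subseteq> (\<lambda>k. if x + k < n then x + k else x + k - n) ` K"
    using assms(2) by blast
  then have "card {y. y < n \<and> y \<noteq> x \<and> Q y} \<le> card ((\<lambda>k. if x + k < n then x + k else x + k - n) ` K)"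
    by (rule card_mono[rotated]) (simp add: assms(3))
  also have "\<dots> \<le> card K" by (rule card_image_le[OF assms(3)])
  finally show ?thesis .
qed

lemma short_star:
  assumes "x < n" "n = 4*m + b - 1" "b \<ge> 2"
  shows "card {y. y < n \<and> y \<noteq> x \<and> col (\<lambda>u v. cdist n u v \<le> 2*m) {x,y} = 2} \<le> b - 2"
proof -
  have "card {y. y < n \<and> y \<noteq> x \<and> col (\<lambda>u v. cdist n u v \<le> 2*m) {x,y} = 2} \<le> card {2*m+1 .. n - (2*m+1)}"
  proof (rule circ_count[OF assms(1)])
    fix y assume y: "y < n" "y \<noteq> x" "col (\<lambda>u v. cdist n u v \<le> 2*m) {x,y} = 2"
    have "\<not> cdist n x y \<le> 2*m"
      using y(3) col_pair[of "\<lambda>u v. cdist n u v \<le> 2*m", OF _ y(2)[symmetric]] cdist_sym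
      by (metis (no_types, lifting) numeral_One numeral_eq_iff semiring_norm(85))
    then have c: "cdist n x y \<ge> 2*m+1" by simp
    show "\<exists>k\<in>{2*m+1 .. n - (2*m+1)}. (if x + k < n then x + k else x + k - n) = y"
    proof (cases "x < y")
      case True
      then show ?thesis using c y(1) by (intro bexI[of _ "y - x"]) (auto simp: cdist_def ld_def)
    next
      case False
      then show ?thesis using c y(1,2) assms(1) by (intro bexI[of _ "n - (x - y)"]) (auto simp: cdist_def ld_def)
    qed
  qed simp
  then show ?thesis using assms by simp
qed

lemma match_setup:
  assumes em: "embedding n c a E j \<phi>" and cy: "cyc_increasing a \<phi>"
  obtains t where "t < a" "\<forall>i j. i < j \<longrightarrow> j < a \<longrightarrow> \<phi> ((t+i) mod a) < \<phi> ((t+j) mod a)"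
    "\<And>i. i < a \<Longrightarrow> \<phi> ((t+i) mod a) < n"
proof -
  obtain t where t: "t < a" "\<forall>i j. i < j \<longrightarrow> j < a \<longrightarrow> \<phi> ((t+i) mod a) < \<phi> ((t+j) mod a)"
    using cy unfolding cyc_increasing_def by blast
  have im: "\<phi> ` {0..<a} \<subseteq> {0..<n}" using em unfolding embedding_def by blast
  have "\<And>i. i < a \<Longrightarrow> \<phi> ((t+i) mod a) < n"
  proof -
    fix i assume "i < a"
    then have "(t+i) mod a \<in> {0..<a}" by simp
    then show "\<phi> ((t+i) mod a) < n" using im by fastforce
  qed
  then show ?thesis using that t by blast
qed

lemma amod: "m < a \<Longrightarrow> (a + m) mod a = (m::nat)" by simp

lemma short_match:
  assumes a: "a = 4*m+2" and n: "n = 4*m + b - 1" and b: "b \<ge> 2"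
    and em: "embedding n (col (\<lambda>u v. cdist n u v \<le> 2*m)) a (nested_matching a) 1 \<phi>"
    and cy: "cyc_increasing a \<phi>"
  shows False
proof -
  define P where "P = (\<lambda>u v. cdist n u v \<le> 2*m)"
  have sym: "\<And>x y. P x y \<Longrightarrow> P y x" unfolding P_def using cdist_sym by metis
  obtain t where t: "t < a" and inc: "\<forall>i j. i < j \<longrightarrow> j < a \<longrightarrow> \<phi> ((t+i) mod a) < \<phi> ((t+j) mod a)"
    and bnd: "\<And>i. i < a \<Longrightarrow> \<phi> ((t+i) mod a) < n"
    using match_setup[OF em cy] by blast
  define q where "q i = \<phi> ((t+i) mod a)" for i
  have qinc: "\<forall>i j. i < j \<longrightarrow> j < a \<longrightarrow> q i < q j" using inc unfolding q_def by blast
  have gap: "\<And>i j. i \<le> j \<Longrightarrow> j < a \<Longrightarrow> q i + (j - i) \<le> q j" using inc_gap[OF qinc] by blast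
  have qb: "\<And>i. i < a \<Longrightarrow> q i < n" using bnd unfolding q_def by blast
  have e: "P (\<phi> m) (\<phi> (3*m+1))"
    using edge_P[OF em[folded P_def] sym, of m] a by simp
  obtain i j where ij: "i < j" "j < a" "j = i + (2*m+1)" "P (q i) (q j)"
  proof (cases "t \<le> m")
    case True
    have "q (m - t) = \<phi> m" "q (3*m+1-t) = \<phi> (3*m+1)" unfolding q_def using True a by auto
    moreover have "m - t < 3*m+1-t" "3*m+1-t < a" "3*m+1-t = (m - t) + (2*m+1)" using True a by auto
    ultimately show ?thesis using that[of "m - t" "3*m+1-t"] e by metis
  next
    case False
    show ?thesis
    proof (cases "t \<le> 3*m+1")
      case True
      have eq: "t + (5*m+2-t) = a + m" using True a by simp
      have "(t + (5*m+2-t)) mod a = m" unfolding eq by (rule amod) (use a in simp)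
      then have "q (3*m+1-t) = \<phi> (3*m+1)" "q (5*m+2-t) = \<phi> m" unfolding q_def using True a by auto
      moreover have "3*m+1-t < 5*m+2-t" "5*m+2-t < a" "5*m+2-t = (3*m+1-t) + (2*m+1)" using True False a by auto
      moreover have "P (\<phi> (3*m+1)) (\<phi> m)" using e sym by blast
      ultimately show ?thesis using that[of "3*m+1-t" "5*m+2-t"] by metis
    next
      case F2: False
      have eq1: "t + (5*m+2-t) = a + m" and eq2: "t + (7*m+3-t) = a + (3*m+1)" using t a by auto
      have "(t + (5*m+2-t)) mod a = m" unfolding eq1 by (rule amod) (use a in simp)
      moreover have "(t + (7*m+3-t)) mod a = 3*m+1" unfolding eq2 by (rule amod) (use a in simp)
      ultimately have "q (5*m+2-t) = \<phi> m" "q (7*m+3-t) = \<phi> (3*m+1)" unfolding q_def using t a F2 by auto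
      moreover have "5*m+2-t < 7*m+3-t" "7*m+3-t < a" "7*m+3-t = (5*m+2-t) + (2*m+1)" using t F2 a by auto
      ultimately show ?thesis using that[of "5*m+2-t" "7*m+3-t"] e by metis
    qed
  qed
  have g1: "q i + (2*m+1) \<le> q j" using gap[of i j] ij by simp
  have g2: "q 0 + i \<le> q i" using gap[of 0 i] ij by simp
  have g3: "q j + (a - 1 - j) \<le> q (a - 1)" using gap[of j "a-1"] ij by simp
  have g4: "q (a - 1) < n" using qb a by simp
  have "cdist n (q i) (q j) \<ge> 2*m+1"
    unfolding cdist_def ld_def using g1 g2 g3 g4 ij a by auto
  then show False using ij(4) unfolding P_def by simp
qed

lemma long_star:
  assumes "x < n" "n = 4*m + 2*k - 3" "m \<ge> 1" "k \<ge> 1"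
  shows "card {y. y < n \<and> y \<noteq> x \<and> col (\<lambda>u v. k \<le> cdist n u v) {x,y} = 2} \<le> 2*k - 2"
proof -
  have "card {y. y < n \<and> y \<noteq> x \<and> col (\<lambda>u v. k \<le> cdist n u v) {x,y} = 2} \<le> card ({1..<k} \<union> {n+1-k..<n})"
  proof (rule circ_count[OF assms(1)])
    fix y assume y: "y < n" "y \<noteq> x" "col (\<lambda>u v. k \<le> cdist n u v) {x,y} = 2"
    have "\<not> k \<le> cdist n x y"
      using y(3) col_pair[of "\<lambda>u v. k \<le> cdist n u v", OF _ y(2)[symmetric]] cdist_sym
      by (metis (no_types, lifting) numeral_One numeral_eq_iff semiring_norm(85))
    then have c: "cdist n x y < k" by simp
    show "\<exists>k'\<in>{1..<k} \<union> {n+1-k..<n}. (if x + k' < n then x + k' else x + k' - n) = y"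
    proof (cases "x < y")
      case True
      then show ?thesis using c y(1) by (intro bexI[of _ "y - x"]) (auto simp: cdist_def ld_def)
    next
      case False
      then show ?thesis using c y(1,2) assms(1) by (intro bexI[of _ "n - (x - y)"]) (auto simp: cdist_def ld_def)
    qed
  qed simp
  also have "\<dots> \<le> card {1..<k} + card {n+1-k..<n}" by (rule card_Un_le)
  also have "\<dots> = 2*k - 2" using assms by simp
  finally show ?thesis .
qed

lemma cdist_lt: "x < y \<Longrightarrow> cdist n x y = min (y - x) (n - (y - x))"
  unfolding cdist_def ld_def by simp

lemma long_match:
  assumes a: "a = 4*m" and m: "m \<ge> 1" and n: "n = 4*m + 2*k - 3" and k: "k \<ge> 1"
    and em: "embedding n (col (\<lambda>u v. k \<le> cdist n u v)) a (nested_matching a) 1 \<phi>"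
    and cy: "cyc_increasing a \<phi>"
  shows False
proof -
  define P where "P = (\<lambda>u v. k \<le> cdist n u v)"
  have sym: "\<And>x y. P x y \<Longrightarrow> P y x" unfolding P_def using cdist_sym by metis
  obtain t where t: "t < a" and inc: "\<forall>i j. i < j \<longrightarrow> j < a \<longrightarrow> \<phi> ((t+i) mod a) < \<phi> ((t+j) mod a)"
    and bnd: "\<And>i. i < a \<Longrightarrow> \<phi> ((t+i) mod a) < n"
    using match_setup[OF em cy] by blast
  define q where "q i = \<phi> ((t+i) mod a)" for i
  have qinc: "\<forall>i j. i < j \<longrightarrow> j < a \<longrightarrow> q i < q j" using inc unfolding q_def by blast
  have gap: "\<And>i j. i \<le> j \<Longrightarrow> j < a \<Longrightarrow> q i + (j - i) \<le> q j" using inc_gap[OF qinc] by blast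
  have qb: "\<And>i. i < a \<Longrightarrow> q i < n" using bnd unfolding q_def by blast
  have Pd: "k \<le> q j - q i \<and> k \<le> n - (q j - q i)" if "P (q i) (q j)" "i < j" "j < a" for i j
  proof -
    have "q i < q j" using qinc that by blast
    then show ?thesis using that(1) cdist_lt[of "q i" "q j" n] unfolding P_def by simp
  qed
  have e1: "P (\<phi> (2*m-1)) (\<phi> (2*m))"
    using edge_P[OF em[folded P_def] sym, of "2*m-1"] a m by (simp add: Suc_diff_Suc)
  have e2: "P (\<phi> 0) (\<phi> (4*m-1))"
    using edge_P[OF em[folded P_def] sym, of 0] a m by simp
  have caseI: False if i: "i + 2*m + 1 < a" "P (q i) (q (i+1))" "P (q (i+2*m)) (q (i+2*m+1))" for i
  proof -
    have h1: "k \<le> q (i+1) - q i" using Pd[of i "i+1"] i by simp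
    have h2: "k \<le> q (i+2*m+1) - q (i+2*m)" using Pd[of "i+2*m" "i+2*m+1"] i by simp
    have g1: "q (i+1) + (2*m - 1) \<le> q (i+2*m)" using gap[of "i+1" "i+2*m"] i m by simp
    have g2: "q 0 + i \<le> q i" using gap[of 0 i] i by simp
    have g3: "q (i+2*m+1) + (a - 1 - (i+2*m+1)) \<le> q (a - 1)" using gap[of "i+2*m+1" "a-1"] i by simp
    have g4: "q (a - 1) < n" using qb a m by simp
    have "q i < q (i+1)" "q (i+2*m) < q (i+2*m+1)" using qinc i by auto
    then show False using h1 h2 g1 g2 g3 g4 a n m k by linarith
  qed
  have caseII: False if i: "P (q (2*m-1)) (q (2*m))" "P (q 0) (q (4*m-1))"
  proof -
    have h1: "k \<le> q (2*m) - q (2*m-1)" using Pd[of "2*m-1" "2*m"] i a m by simp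
    have h2: "k \<le> n - (q (4*m-1) - q 0)" using Pd[of 0 "4*m-1"] i a m by simp
    have g1: "q 0 + (2*m - 1) \<le> q (2*m-1)" using gap[of 0 "2*m-1"] a m by simp
    have g3: "q (2*m) + (4*m - 1 - 2*m) \<le> q (4*m - 1)" using gap[of "2*m" "4*m-1"] a m by simp
    have "q (2*m-1) < q (2*m)" using qinc a m by simp
    then show False using h1 h2 g1 g3 a n m k by linarith
  qed
  show False
  proof (cases "t = 0")
    case True
    then have "q i = \<phi> i" if "i < a" for i using that unfolding q_def by simp
    then show False using caseII e1 e2 a m by simp
  next
    case t0: False
    show False
    proof (cases "t = 2*m")
      case True
      have "q (2*m-1) = \<phi> (4*m-1)" unfolding q_def using True a m by (simp add: Suc_diff_Suc)
      moreover have "q (2*m) = \<phi> 0" unfolding q_def using True a by simp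
      moreover have "(t + (4*m-1)) mod a = 2*m-1"
      proof -
        have eq: "t + (4*m-1) = a + (2*m-1)" using True a m by simp
        show ?thesis unfolding eq by (rule amod) (use a m in simp)
      qed
      then have "q (4*m-1) = \<phi> (2*m-1)" unfolding q_def by simp
      moreover have "q 0 = \<phi> (2*m)" unfolding q_def using True a m by simp
      ultimately show False using caseII e1 e2 sym by metis
    next
      case t2: False
      show False
      proof (cases "t < 2*m")
        case True
        have "q (2*m-1-t) = \<phi> (2*m-1)" unfolding q_def using True a m by simp
        moreover have "q (2*m-1-t+1) = \<phi> (2*m)" unfolding q_def using True a m by simp
        moreover have "q (2*m-1-t+2*m) = \<phi> (4*m-1)" unfolding q_def using True a m by simp
        moreover have "q (2*m-1-t+2*m+1) = \<phi> 0" unfolding q_def using True a m by simp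
        moreover have "2*m-1-t + 2*m + 1 < a" using True t0 a by simp
        ultimately show False using caseI[of "2*m-1-t"] e1 e2 sym by metis
      next
        case False
        have tt: "2*m < t" "t < 4*m" using False t2 t a by auto
        have "q (4*m-1-t) = \<phi> (4*m-1)" unfolding q_def using tt a m by simp
        moreover have "q (4*m-1-t+1) = \<phi> 0" unfolding q_def using tt a m by simp
        moreover have "(t + (4*m-1-t+2*m)) mod a = 2*m-1"
        proof -
          have eq: "t + (4*m-1-t+2*m) = a + (2*m-1)" using tt a m by simp
          show ?thesis unfolding eq by (rule amod) (use a m in simp)
        qed
        moreover have "(t + (4*m-1-t+2*m+1)) mod a = 2*m"
        proof -
          have eq: "t + (4*m-1-t+2*m+1) = a + (2*m)" using tt a m by simp
          show ?thesis unfolding eq by (rule amod) (use a m in simp)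
        qed
        moreover have "4*m-1-t + 2*m + 1 < a" using tt a by simp
        ultimately show False using caseI[of "4*m-1-t"] e1 e2 sym unfolding q_def by metis
      qed
    qed
  qed
qed

lemma emb_mono: "embedding n c h E j \<phi> \<Longrightarrow> n \<le> n0 \<Longrightarrow> embedding n0 c h E j \<phi>"
  unfolding embedding_def by auto

theorem proposition4p35:
  fixes a b :: nat and S :: "nat set set"
  assumes "even a" and "a \<ge> 2" and "b \<ge> 2"
    and "a mod 4 = 2 \<or> even b"
    and "is_star b S"
  shows "a + b - 2 \<le> Rcyc a (nested_matching a) b S"
proof -
  define Q where "Q n = (\<forall>c. two_coloring n c \<longrightarrow>
      (\<exists>\<phi>. embedding n c a (nested_matching a) 1 \<phi> \<and> cyc_increasing a \<phi>) \<or>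
      (\<exists>\<phi>. embedding n c b S 2 \<phi> \<and> cyc_increasing b \<phi>))" for n
  have R: "Rcyc a (nested_matching a) b S = (LEAST n. Q n)" unfolding Rcyc_def Q_def by simp
  have ex: "\<exists>N. Q N" unfolding Q_def using rcyc_exists[OF assms(2,3,5)] .
  define n0 where "n0 = a + b - 3"
  obtain c where c1: "\<And>\<phi>. \<not> (embedding n0 c a (nested_matching a) 1 \<phi> \<and> cyc_increasing a \<phi>)"
     and c2: "\<And>\<phi>. \<not> embedding n0 c b S 2 \<phi>" and c3: "\<And>n. two_coloring n c"
  proof (cases "a mod 4 = 2")
    case True
    define m where "m = a div 4"
    have a: "a = 4*m+2" using True m_def by presburger
    have n: "n0 = 4*m + b - 1" using a n0_def assms by simp
    let ?c = "col (\<lambda>u v. cdist n0 u v \<le> 2*m)"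
    show ?thesis
    proof (rule that[of ?c])
      show "\<not> (embedding n0 ?c a (nested_matching a) 1 \<phi> \<and> cyc_increasing a \<phi>)" for \<phi>
        using short_match[OF a n assms(3)] by blast
      show "\<not> embedding n0 ?c b S 2 \<phi>" for \<phi>
        by (rule star_none[OF assms(5,3)]) (use short_star[OF _ n assms(3)] in blast)
      show "two_coloring n ?c" for n by (rule col_two)
    qed
  next
    case False
    then have "a mod 4 = 0" "even b" using assms(1,4) by presburger+
    define m where "m = a div 4"
    define k where "k = b div 2"
    have a: "a = 4*m" using \<open>a mod 4 = 0\<close> m_def by presburger
    have m: "m \<ge> 1" using a assms(2) by simp
    have bk: "b = 2*k" using \<open>even b\<close> k_def by simp
    have k: "k \<ge> 1" using bk assms(3) by simp
    have n: "n0 = 4*m + 2*k - 3" using a bk n0_def by simp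
    let ?c = "col (\<lambda>u v. k \<le> cdist n0 u v)"
    show ?thesis
    proof (rule that[of ?c])
      show "\<not> (embedding n0 ?c a (nested_matching a) 1 \<phi> \<and> cyc_increasing a \<phi>)" for \<phi>
        using long_match[OF a m n k] by blast
      show "\<not> embedding n0 ?c b S 2 \<phi>" for \<phi>
        by (rule star_none[OF assms(5,3)]) (use long_star[OF _ n m k] bk in simp)
      show "two_coloring n ?c" for n by (rule col_two)
    qed
  qed
  have notQ: "\<not> Q n" if "n \<le> n0" for n
    unfolding Q_def using c1 c2 c3 emb_mono[OF _ that] by blast
  have "Q (LEAST n. Q n)" using ex by (rule LeastI_ex)
  then have "\<not> (LEAST n. Q n) \<le> n0" using notQ by blast
  then show ?thesis unfolding R n0_def by simp
qed

end
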